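(* Let $p$ be a prime, let $r$ be a positive integer, let $V\subseteq\mathbb{Z}_p^r$, and let $S\subseteq\mathbb{N}$ be an infinite subset. For each $1\le k\le r$ let $P_k\in\mathbb{Z}_p\langle z\rangle$, and define $P\colon S\to\mathbb{Z}_p^r$ by $P(n)=(P_1(n),\dots,P_r(n))$. Suppose that for every $y\in\mathbb{Z}_p^r\setminus V$ the set $\{n\in S\colon P(n)=y\}$ is empty, and for every $y\in V$ the set $\{n\in S\colon P(n)=y\}$ is finite. Then there exists $N\ge 0$ such that $$|\{n\in S\colon P(n)=y\}|\le N$$ for all $y\in V$.
   Context: $\mathbb{Q}_p\langle z\rangle$ denotes the ring of strictly convergent power series $\sum_{n\ge0}a_nz^n\in\mathbb{Q}_p[[z]]$ with $|a_n|_p\to0$; the Gauss norm is $|\sum a_nz^n|_{\rm Gauss}=\max_n|a_n|_p$, and $\mathbb{Z}_p\langle z\rangle$ is the subring of elements of Gauss norm at most $1$ (i.e. with all $a_n\in\mathbb{Z}_p$). Such series converge on $\mathbb{Z}_p$, so $P_k(n)$ is defined for $n\in\mathbb{N}$. Here $\mathbb{N}=\{0,1,2,\dots\}$. *)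

theory Defs
  imports "HOL-Computational_Algebra.Primes"
begin

text \<open>p-adic integers, represented as the inverse limit of Z/p^k Z:
  a p-adic integer x is a compatible sequence of residues x k in {0..<p^k}.\<close>
definition padic_int :: "nat \<Rightarrow> (nat \<Rightarrow> int) set" where
  "padic_int p = {x. (\<forall>k. 0 \<le> x k \<and> x k < int p ^ k) \<and>
                      (\<forall>k. x k = x (Suc k) mod int p ^ k)}"

definition padic_tuples :: "nat \<Rightarrow> nat \<Rightarrow> (nat \<Rightarrow> int) list set" where
  "padic_tuples p r = {ys. length ys = r \<and> set ys \<subseteq> padic_int p}"

text \<open>Strictly convergent power series with Z_p coefficients (Z_p<z>):
  a coefficient sequence a :: nat => Z_p with a m -> 0 p-adically, i.e.
  for every k, a m is divisible by p^k (residue 0 mod p^k) for all large m.\<close>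
definition tate_Zp :: "nat \<Rightarrow> (nat \<Rightarrow> nat \<Rightarrow> int) set" where
  "tate_Zp p = {a. (\<forall>m. a m \<in> padic_int p) \<and> (\<forall>k. \<exists>M. \<forall>m\<ge>M. a m k = 0)}"

text \<open>Evaluation of such a series at a natural number n: the residue mod p^k of
  the value is the residue of the (finite) sum of the terms whose coefficient is
  nonzero mod p^k.\<close>
definition tate_eval :: "nat \<Rightarrow> (nat \<Rightarrow> nat \<Rightarrow> int) \<Rightarrow> nat \<Rightarrow> (nat \<Rightarrow> int)" where
  "tate_eval p a n = (\<lambda>k. (\<Sum>m\<in>{m. a m k \<noteq> 0}. a m k * int n ^ m) mod int p ^ k)"

end

theory Submission imports Defs "HOL-Computational_Algebra.Polynomial" begin

lemma poly_dvd_all_coeffs: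
  fixes Q :: "int poly"
  assumes "\<forall>i. d dvd coeff Q i"
  shows "d dvd poly Q x"
  unfolding poly_altdef using assms by (auto intro!: dvd_sum)

lemma poly_shift_Suc_pCons:
  "poly_shift n (G::int poly) = pCons (coeff G n) (poly_shift (Suc n) G)"
  by (simp add: poly_eq_iff coeff_poly_shift coeff_pCons split: nat.split)

lemma coeff_synthetic_div_shift:
  "coeff (synthetic_div (G::int poly) c) j = poly (poly_shift (Suc j) G) c"
proof (induction G arbitrary: j)
  case 0 then show ?case by simp
next
  case (pCons a G)
  show ?case
  proof (cases j)
    case 0
    have "poly_shift (Suc 0) (pCons a G) = G"
      by (simp add: poly_eq_iff coeff_poly_shift)
    then show ?thesis using 0 by simp
  next
    case (Suc j')
    have "poly_shift (Suc (Suc j')) (pCons a G) = poly_shift (Suc j') G"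
      by (simp add: poly_eq_iff coeff_poly_shift)
    then show ?thesis using Suc pCons by simp
  qed
qed

lemma val_lemma:
  fixes a b :: int and p :: nat
  assumes "prime p" "\<not> int p ^ Suc M dvd a" "int p ^ (e + M) dvd a * b"
  shows "int p ^ e dvd b"
  using assms(2,3)
proof (induction M arbitrary: a)
  case 0
  have pr: "prime (int p)" using assms(1) by simp
  have "\<not> int p dvd a" using 0 by simp
  then have "coprime (int p) a" using pr prime_imp_coprime by blast
  then have "coprime (int p ^ e) a" by simp
  then show ?case using 0 by (simp add: coprime_dvd_mult_right_iff)
next
  case (Suc M)
  have pr: "prime (int p)" using assms(1) by simp
  show ?case
  proof (cases "int p dvd a")
    case True
    then obtain a' where a': "a = int p * a'" by blast
    have p0: "int p \<noteq> 0" using pr by auto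
    have "\<not> int p ^ Suc M dvd a'" using Suc.prems(1) a' by (auto simp: mult_dvd_mono)
    moreover have "int p ^ (e + M) dvd a' * b"
      using Suc.prems(2) a' p0 by (simp add: mult.assoc)
    ultimately show ?thesis using Suc.IH by blast
  next
    case False
    then have "coprime (int p) a" using pr prime_imp_coprime by blast
    then have "coprime (int p ^ (e + Suc M)) a" by simp
    then have "int p ^ (e + Suc M) dvd b" using Suc.prems(2) by (simp add: coprime_dvd_mult_right_iff)
    then show ?thesis by (meson dvd_power_le dvd_refl le_add1 dvd_trans)
  qed
qed

lemma core:
  fixes p :: nat and G :: "int poly" and X :: "int set"
  assumes pr: "prime p"
  and "card X = Suc D"
  and "\<forall>m\<ge>1. int p ^ v dvd coeff G m"
  and "\<not> int p ^ Suc v dvd coeff G D"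
  and "\<forall>m>D. int p ^ Suc v dvd coeff G m"
  and "\<forall>x\<in>X. \<forall>y\<in>X. x \<noteq> y \<longrightarrow> \<not> int p ^ Suc M dvd (x - y)"
  and "\<forall>x\<in>X. int p ^ (Suc v + D * M) dvd poly G x"
  shows False
  using assms(2-)
proof (induction D arbitrary: G X)
  case 0
  then obtain x where X: "X = {x}" by (auto simp: card_Suc_eq)
  obtain a G' where G: "G = pCons a G'" by (cases G) auto
  have "\<forall>i. int p ^ Suc v dvd coeff G' i"
  proof
    fix i show "int p ^ Suc v dvd coeff G' i" using "0.prems"(4)[rule_format, of "Suc i"] G by simp
  qed
  then have "int p ^ Suc v dvd poly G' x" by (rule poly_dvd_all_coeffs)
  moreover have "int p ^ Suc v dvd poly G x" using "0.prems"(6) X by simp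
  ultimately have "int p ^ Suc v dvd a" using G
    by (simp add: dvd_add_left_iff)
  then show False using "0.prems"(3) G by simp
next
  case (Suc D)
  have "X \<noteq> {}" using Suc.prems(1) by auto
  then obtain x0 where x0: "x0 \<in> X" by blast
  define X' where "X' = X - {x0}"
  have fin: "finite X" by (rule card_ge_0_finite) (use Suc.prems(1) in simp)
  have cX': "card X' = Suc D" using Suc.prems(1) x0 fin by (simp add: X'_def)
  define Q where "Q = synthetic_div G x0"
  have cq: "coeff Q j = poly (poly_shift (Suc j) G) x0" for j
    unfolding Q_def by (rule coeff_synthetic_div_shift)
  have shift_dvd: "int p ^ Suc v dvd poly (poly_shift (Suc j) G) x0" if "j \<ge> Suc D" for j
    by (rule poly_dvd_all_coeffs) (use Suc.prems(4) that in \<open>auto simp: coeff_poly_shift\<close>)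
  have h1: "\<forall>m\<ge>1. int p ^ v dvd coeff Q m"
    unfolding cq by (auto intro!: poly_dvd_all_coeffs simp: coeff_poly_shift Suc.prems(2))
  have h3: "\<forall>m>D. int p ^ Suc v dvd coeff Q m" unfolding cq using shift_dvd by auto
  have h2: "\<not> int p ^ Suc v dvd coeff Q D"
  proof
    assume a: "int p ^ Suc v dvd coeff Q D"
    have "coeff Q D = coeff G (Suc D) + x0 * poly (poly_shift (Suc (Suc D)) G) x0"
      unfolding cq by (subst poly_shift_Suc_pCons) simp
    moreover have "int p ^ Suc v dvd x0 * poly (poly_shift (Suc (Suc D)) G) x0"
      using shift_dvd[of "Suc D"] by simp
    ultimately have "int p ^ Suc v dvd coeff G (Suc D)" using a
      by (metis dvd_add_left_iff)
    then show False using Suc.prems(3) by simp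
  qed
  have h4: "\<forall>x\<in>X'. \<forall>y\<in>X'. x \<noteq> y \<longrightarrow> \<not> int p ^ Suc M dvd (x - y)"
    using Suc.prems(5) by (auto simp: X'_def)
  have h5: "\<forall>x\<in>X'. int p ^ (Suc v + D * M) dvd poly Q x"
  proof
    fix x assume x: "x \<in> X'"
    have eq: "poly G x = (x - x0) * poly Q x + poly G x0"
      using arg_cong[OF synthetic_div_correct'[of x0 G], of "\<lambda>q. poly q x"]
      by (simp add: Q_def algebra_simps)
    have "int p ^ (Suc v + Suc D * M) dvd poly G x" "int p ^ (Suc v + Suc D * M) dvd poly G x0"
      using Suc.prems(6) x x0 by (auto simp: X'_def)
    then have "int p ^ (Suc v + Suc D * M) dvd poly G x - poly G x0" by (rule dvd_diff)
    moreover have "poly G x - poly G x0 = (x - x0) * poly Q x" using eq by simp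
    moreover have "Suc v + Suc D * M = (Suc v + D * M) + M" by simp
    ultimately have "int p ^ ((Suc v + D * M) + M) dvd (x - x0) * poly Q x"
      by metis
    moreover have "\<not> int p ^ Suc M dvd (x - x0)" using Suc.prems(5) x x0 by (auto simp: X'_def)
    ultimately show "int p ^ (Suc v + D * M) dvd poly Q x" using val_lemma[OF pr] by blast
  qed
  show False using Suc.IH[OF cX' h1 h2 h3 h4 h5] .
qed

lemma padic_mod:
  assumes "x \<in> padic_int p" "j \<le> E"
  shows "x j = x E mod int p ^ j"
  using assms(2)
proof (induction E rule: dec_induct)
  case base
  have "0 \<le> x j" "x j < int p ^ j" using assms(1) unfolding padic_int_def by blast+
  then show ?case by (simp add: mod_pos_pos_trivial)
next
  case (step E)
  have "x E = x (Suc E) mod int p ^ E" using assms(1) unfolding padic_int_def by blast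
  then have "x E mod int p ^ j = x (Suc E) mod int p ^ j"
  proof -
    have "int p ^ j dvd int p ^ E" using step.hyps(1) by (intro le_imp_power_dvd) simp
    then show ?thesis using \<open>x E = _\<close> by (metis mod_mod_cancel)
  qed
  then show ?case using step.IH by simp
qed

lemma padic_zero_iff:
  assumes "x \<in> padic_int p" "j \<le> E"
  shows "x j = 0 \<longleftrightarrow> int p ^ j dvd x E"
  using padic_mod[OF assms] by (simp add: dvd_eq_mod_eq_0)

lemma padic_zero0:
  assumes "x \<in> padic_int p"
  shows "x 0 = 0"
proof -
  have "0 \<le> x 0" "x 0 < int p ^ 0" using assms unfolding padic_int_def by blast+
  then show ?thesis by simp
qed

lemma const_eval:
  assumes "a \<in> tate_Zp p" "\<forall>m\<ge>1. \<forall>j. a m j = 0"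
  shows "tate_eval p a n = a 0"
proof
  fix j
  have a0: "a 0 \<in> padic_int p" using assms(1) unfolding tate_Zp_def by blast
  have r: "0 \<le> a 0 j" "a 0 j < int p ^ j" using a0 unfolding padic_int_def by blast+
  have sub: "{m. a m j \<noteq> 0} \<subseteq> {0}" using assms(2) by (auto simp: Suc_le_eq)
  show "tate_eval p a n j = a 0 j"
  proof (cases "a 0 j = 0")
    case True
    then have "{m. a m j \<noteq> 0} = {}" using sub by auto
    then show ?thesis using True by (simp add: tate_eval_def)
  next
    case False
    then have "{m. a m j \<noteq> 0} = {0}" using sub by auto
    then show ?thesis using r by (simp add: tate_eval_def mod_pos_pos_trivial)
  qed
qed

lemma not_dvd_small:
  fixes x y M p :: nat
  assumes "prime p" "x \<le> M" "y \<le> M" "x \<noteq> y"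
  shows "\<not> int p ^ Suc M dvd (int x - int y)"
proof
  assume d: "int p ^ Suc M dvd (int x - int y)"
  have "int x - int y \<noteq> 0" using assms by simp
  then have "\<bar>int p ^ Suc M\<bar> \<le> \<bar>int x - int y\<bar>" using d dvd_imp_le_int by blast
  moreover have "\<bar>int x - int y\<bar> \<le> int M" using assms by auto
  moreover have "M < p ^ Suc M"
  proof -
    have "p \<ge> 2" using assms(1) prime_ge_2_nat by blast
    have "M < 2 ^ M" by (rule less_exp)
    also have "\<dots> \<le> p ^ M" using \<open>p \<ge> 2\<close> by (simp add: power_mono)
    also have "\<dots> \<le> p ^ Suc M" using \<open>p \<ge> 2\<close> by simp
    finally show ?thesis .
  qed
  ultimately show False by (smt (verit) of_nat_less_iff of_nat_power)
qed

theorem lemma2p1: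
  fixes p r :: nat and V :: "(nat \<Rightarrow> int) list set" and S :: "nat set"
    and P :: "nat \<Rightarrow> nat \<Rightarrow> nat \<Rightarrow> int"
  assumes "prime p" and "r \<ge> 1"
    and "V \<subseteq> padic_tuples p r"
    and "infinite S"
    and "\<forall>k\<in>{1..r}. P k \<in> tate_Zp p"
    and "\<forall>y\<in>padic_tuples p r - V.
           {n\<in>S. map (\<lambda>k. tate_eval p (P k) n) [1..<Suc r] = y} = {}"
    and "\<forall>y\<in>V. finite {n\<in>S. map (\<lambda>k. tate_eval p (P k) n) [1..<Suc r] = y}"
  shows "\<exists>N::nat. \<forall>y\<in>V.
           card {n\<in>S. map (\<lambda>k. tate_eval p (P k) n) [1..<Suc r] = y} \<le> N"
proof (cases "\<forall>k\<in>{1..r}. \<forall>m\<ge>1. \<forall>j. P k m j = 0")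
  case True
  define y0 where "y0 = map (\<lambda>k. P k 0) [1..<Suc r]"
  have fib: "{n\<in>S. map (\<lambda>k. tate_eval p (P k) n) [1..<Suc r] = y0} = S"
  proof -
    have "map (\<lambda>k. tate_eval p (P k) n) [1..<Suc r] = y0" for n
      unfolding y0_def using True assms(5) const_eval by (auto intro!: map_cong)
    then show ?thesis by auto
  qed
  have "y0 \<in> padic_tuples p r"
    using assms(5) unfolding y0_def padic_tuples_def tate_Zp_def by auto
  moreover have "S \<noteq> {}" using assms(4) by auto
  ultimately have "y0 \<in> V" using assms(6) fib by blast
  then have False using assms(7) fib assms(4) by auto
  then show ?thesis ..
next
  case False
  then obtain k0 m0 j0 where k0: "k0 \<in> {1..r}" and m0: "m0 \<ge> 1" and j0: "P k0 m0 j0 \<noteq> 0"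
    by blast
  define a where "a = P k0"
  have aT: "a \<in> tate_Zp p" using assms(5) k0 a_def by blast
  have apad: "a m \<in> padic_int p" for m using aT unfolding tate_Zp_def by blast
  have "j0 \<noteq> 0" using j0 padic_zero0[OF apad] a_def by metis
  then obtain j' where j': "j0 = Suc j'" using not0_implies_Suc by blast
  have ex: "\<exists>j. \<exists>m\<ge>1. a m (Suc j) \<noteq> 0" using j' j0 m0 a_def by blast
  define v where "v = (LEAST j. \<exists>m\<ge>1. a m (Suc j) \<noteq> 0)"
  have hv2: "\<exists>m\<ge>1. a m (Suc v) \<noteq> 0" unfolding v_def using LeastI_ex[OF ex] .
  have hv1: "a m v = 0" if "m \<ge> 1" for m
  proof (cases v)
    case 0 then show ?thesis using padic_zero0[OF apad] by simp
  next
    case (Suc w)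
    then have "w < v" by simp
    then have "\<not> (\<exists>m\<ge>1. a m (Suc w) \<noteq> 0)" unfolding v_def by (rule not_less_Least)
    then show ?thesis using that Suc by blast
  qed
  define T where "T = {m. m \<ge> 1 \<and> a m (Suc v) \<noteq> 0}"
  obtain Mb where Mb: "\<forall>m\<ge>Mb. a m (Suc v) = 0" using aT unfolding tate_Zp_def by blast
  have finT: "finite T"
  proof -
    have "T \<subseteq> {..<Mb}" unfolding T_def using Mb by (auto simp: not_less[symmetric])
    then show ?thesis using finite_subset by blast
  qed
  have Tne: "T \<noteq> {}" using hv2 T_def by blast
  define D where "D = Max T"
  have DT: "D \<in> T" unfolding D_def using finT Tne by simp
  have D1: "D \<ge> 1" and aD: "a D (Suc v) \<noteq> 0" using DT T_def by auto
  have aabove: "a m (Suc v) = 0" if "m > D" for m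
  proof (rule ccontr)
    assume "a m (Suc v) \<noteq> 0"
    then have "m \<in> T" using that D1 T_def by auto
    then have "m \<le> D" unfolding D_def using finT by simp
    then show False using that by simp
  qed
  show ?thesis
  proof (intro exI ballI)
    fix y assume yV: "y \<in> V"
    define F where "F = {n\<in>S. map (\<lambda>k. tate_eval p (P k) n) [1..<Suc r] = y}"
    have finF: "finite F" using assms(7) yV F_def by blast
    show "card {n\<in>S. map (\<lambda>k. tate_eval p (P k) n) [1..<Suc r] = y} \<le> D"
      unfolding F_def[symmetric]
    proof (rule ccontr)
      assume "\<not> card F \<le> D"
      then have "Suc D \<le> card F" by simp
      then obtain Y where YF: "Y \<subseteq> F" and cY: "card Y = Suc D" and finY: "finite Y"
        by (rule obtain_subset_with_card_n)
      have "Y \<noteq> {}" using cY by auto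
      then obtain n0 where n0: "n0 \<in> Y" by blast
      have same: "tate_eval p a n = tate_eval p a n0" if "n \<in> Y" for n
      proof -
        have "map (\<lambda>k. tate_eval p (P k) n) [1..<Suc r] = map (\<lambda>k. tate_eval p (P k) n0) [1..<Suc r]"
        proof -
          have "n \<in> F" "n0 \<in> F" using YF that n0 by auto
          then show ?thesis unfolding F_def by simp
        qed
        moreover have "k0 \<in> set [1..<Suc r]" using k0 by auto
        ultimately show ?thesis unfolding a_def map_eq_conv by blast
      qed
      define M where "M = Max Y"
      define E where "E = Suc v + D * M"
      have vE: "Suc v \<le> E" unfolding E_def by simp
      define c where "c = tate_eval p a n0 E"
      define Fs where "Fs = {m. a m E \<noteq> 0}"
      have finFs: "finite Fs"
      proof -
        obtain Mc where "\<forall>m\<ge>Mc. a m E = 0" using aT unfolding tate_Zp_def by blast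
        then have "Fs \<subseteq> {..<Mc}" unfolding Fs_def by (auto simp: not_less[symmetric])
        then show ?thesis using finite_subset by blast
      qed
      define G :: "int poly" where "G = (\<Sum>m\<in>Fs. monom (a m E) m) - [:c:]"
      have cG: "coeff G m = a m E" if "m \<ge> 1" for m
      proof -
        have "coeff G m = (\<Sum>m'\<in>Fs. if m' = m then a m' E else 0)"
          using that unfolding G_def by (cases m) (simp_all add: coeff_sum coeff_monom)
        also have "\<dots> = (if m \<in> Fs then a m E else 0)" using finFs by simp
        also have "\<dots> = a m E" unfolding Fs_def by auto
        finally show ?thesis .
      qed
      have pG: "poly G (int n) = (\<Sum>m\<in>Fs. a m E * int n ^ m) - c" for n
        unfolding G_def by (simp add: poly_sum poly_monom)
      have c1: "\<forall>m\<ge>1. int p ^ v dvd coeff G m"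
      proof (intro allI impI)
        fix m :: nat assume m: "m \<ge> 1"
        have "v \<le> E" using vE by simp
        then show "int p ^ v dvd coeff G m" using cG[OF m] hv1[OF m] padic_zero_iff[OF apad, of v E m] by simp
      qed
      have c2: "\<not> int p ^ Suc v dvd coeff G D"
        using cG[OF D1] aD padic_zero_iff[OF apad vE] by auto
      have c3: "\<forall>m>D. int p ^ Suc v dvd coeff G m"
        using cG D1 aabove padic_zero_iff[OF apad vE] by auto
      have cX: "card (int ` Y) = Suc D" using cY by (simp add: card_image)
      have c4: "\<forall>x\<in>int ` Y. \<forall>y\<in>int ` Y. x \<noteq> y \<longrightarrow> \<not> int p ^ Suc M dvd (x - y)"
        using not_dvd_small[OF assms(1)] finY unfolding M_def by auto
      have c5: "\<forall>x\<in>int ` Y. int p ^ (Suc v + D * M) dvd poly G x"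
      proof
        fix x assume "x \<in> int ` Y"
        then obtain n where n: "n \<in> Y" "x = int n" by blast
        have "tate_eval p a n E = c" using same[OF n(1)] c_def by simp
        then have "(\<Sum>m\<in>Fs. a m E * int n ^ m) mod int p ^ E = c mod int p ^ E"
          unfolding tate_eval_def Fs_def c_def by simp
        then have "int p ^ E dvd (\<Sum>m\<in>Fs. a m E * int n ^ m) - c"
          by (simp add: mod_eq_dvd_iff)
        then show "int p ^ (Suc v + D * M) dvd poly G x" using pG n E_def by simp
      qed
      show False using core[OF assms(1) cX c1 c2 c3 c4 c5] .
    qed
  qed
qed

end
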